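(* Let $n\ge 2$ and $u,v>0$. There exists an $n$-simplex having one edge of length $v$ and all its remaining edges of length $u$ if and only if $$0<\frac{v}{u}<\sqrt{\frac{2n}{n-1}}.$$
   Context: An $n$-simplex is the convex hull of $n+1$ affinely independent points in a Euclidean space (so it is non-degenerate). *)

theory Defs
  imports "HOL-Analysis.Analysis"
begin

text \<open>An n-simplex is the convex hull of n+1 affinely independent points; it is
  determined by its vertex set V. The edges are the segments between two distinct vertices.\<close>
definition simplex_vertices :: "nat \<Rightarrow> 'a::euclidean_space set \<Rightarrow> bool" where
  "simplex_vertices n V \<longleftrightarrow> finite V \<and> card V = n + 1 \<and> \<not> affine_dependent V"

definition one_edge_v_rest_u :: "'a::euclidean_space set \<Rightarrow> real \<Rightarrow> real \<Rightarrow> bool" where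
  "one_edge_v_rest_u V v u \<longleftrightarrow>
     (\<exists>a\<in>V. \<exists>b\<in>V. a \<noteq> b \<and> dist a b = v \<and>
        (\<forall>x\<in>V. \<forall>y\<in>V. x \<noteq> y \<and> {x, y} \<noteq> {a, b} \<longrightarrow> dist x y = u))"

end

theory Submission imports Defs begin

lemma inner_dist2:
  fixes a y z :: "'a::euclidean_space"
  shows "2 * inner (y - a) (z - a) = (dist y a)^2 + (dist z a)^2 - (dist y z)^2"
  by (simp add: dist_norm power2_norm_eq_inner inner_diff_left inner_diff_right inner_commute algebra_simps)

lemma fwd:
  fixes V :: "'a::euclidean_space set" and m :: nat and u v :: real
  assumes fin: "finite V" and cV: "card V = m + 2" and ind: "\<not> affine_dependent V"
    and aV: "a \<in> V" and bV: "b \<in> V" and ab: "a \<noteq> b" and dab: "dist a b = v"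
    and rest: "\<forall>x\<in>V. \<forall>y\<in>V. x \<noteq> y \<and> {x, y} \<noteq> {a, b} \<longrightarrow> dist x y = u"
    and m1: "m \<ge> 1"
  shows "real m * v^2 < 2 * (real m + 1) * u^2"
proof -
  define C where "C = V - {a, b}"
  have finC: "finite C" using fin C_def by simp
  have cC: "card C = m" unfolding C_def using cV aV bV ab fin
    by (subst card_Diff_subset) auto
  have Cd: "c \<in> C \<Longrightarrow> c \<in> V \<and> c \<noteq> a \<and> c \<noteq> b" for c using C_def by auto
  have dca: "c \<in> C \<Longrightarrow> dist c a = u" for c using rest Cd[of c] aV by (metis doubleton_eq_iff)
  have dcb: "c \<in> C \<Longrightarrow> dist c b = u" for c using rest Cd[of c] bV by (metis doubleton_eq_iff)
  have dcc: "c \<in> C \<Longrightarrow> c' \<in> C \<Longrightarrow> c \<noteq> c' \<Longrightarrow> dist c c' = u" for c c'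
    using rest Cd[of c] Cd[of c'] by (metis doubleton_eq_iff)
  have dba: "dist b a = v" using dab by (simp add: dist_commute)
  have i1: "c \<in> C \<Longrightarrow> inner (c - a) (c - a) = u^2" for c
    using inner_dist2[of c a c] dca[of c] by simp
  have i2: "c \<in> C \<Longrightarrow> c' \<in> C \<Longrightarrow> c \<noteq> c' \<Longrightarrow> inner (c - a) (c' - a) = u^2/2" for c c'
    using inner_dist2[of c a c'] dca[of c] dca[of c'] dcc[of c c'] by simp
  have i3: "c \<in> C \<Longrightarrow> inner (b - a) (c - a) = v^2/2" for c
    using inner_dist2[of b a c] dca[of c] dba dcb[of c] by (simp add: dist_commute)
  have i4: "inner (b - a) (b - a) = v^2"
    using inner_dist2[of b a b] dba by simp
  define s where "s = (\<Sum>c\<in>C. c - a)"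
  define y where "y = b - a"
  have ys: "inner y s = real m * v^2 / 2"
  proof -
    have "inner y s = (\<Sum>c\<in>C. inner (b - a) (c - a))" by (simp add: s_def y_def inner_sum_right)
    also have "\<dots> = (\<Sum>c\<in>C. v^2/2)" using i3 by (intro sum.cong) auto
    finally show ?thesis using cC by simp
  qed
  have inner_row: "c \<in> C \<Longrightarrow> (\<Sum>c'\<in>C. inner (c - a) (c' - a)) = u^2 + (real m - 1) * u^2 / 2" for c
  proof -
    assume c: "c \<in> C"
    have "(\<Sum>c'\<in>C. inner (c - a) (c' - a)) = inner (c - a) (c - a) + (\<Sum>c'\<in>C - {c}. inner (c - a) (c' - a))"
      using finC c by (simp add: sum.remove)
    also have "(\<Sum>c'\<in>C - {c}. inner (c - a) (c' - a)) = (\<Sum>c'\<in>C - {c}. u^2/2)"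
      using i2 c by (intro sum.cong) auto
    also have "\<dots> = (real m - 1) * u^2 / 2" using c finC cC m1 by (simp add: of_nat_diff)
    finally show ?thesis using i1 c by simp
  qed
  have ss: "inner s s = real m * (u^2 + (real m - 1) * u^2 / 2)"
  proof -
    have "inner s s = (\<Sum>c\<in>C. \<Sum>c'\<in>C. inner (c - a) (c' - a))"
      by (simp add: s_def inner_sum_left inner_sum_right inner_commute)
    also have "\<dots> = (\<Sum>c\<in>C. u^2 + (real m - 1) * u^2 / 2)" using inner_row by (intro sum.cong) auto
    finally show ?thesis using cC by simp
  qed
  define z where "z = real m *\<^sub>R y - 2 *\<^sub>R s"
  have zz: "inner z z = real m * (2 * (real m + 1) * u^2 - real m * v^2)"
  proof -
    have "inner z z = (real m)^2 * inner y y - 4 * real m * inner y s + 4 * inner s s"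
      by (simp add: z_def inner_diff_left inner_diff_right inner_commute power2_eq_square algebra_simps)
    also have "\<dots> = real m * (2 * (real m + 1) * u^2 - real m * v^2)"
      by (simp only: i4[folded y_def] ys ss) (simp add: power2_eq_square field_simps)
    finally show ?thesis .
  qed
  have z0: "z \<noteq> 0"
  proof
    assume z: "z = 0"
    define w where "w = (\<lambda>t. if t = a then real m else if t = b then real m else -2)"
    have Vins: "V = insert a (insert b C)" using C_def aV bV by auto
    have anC: "a \<notin> insert b C" using ab C_def by auto
    have bnC: "b \<notin> C" using C_def by auto
    have sw: "sum w V = 0"
    proof -
      have "sum w C = (\<Sum>t\<in>C. -2)" using Cd by (intro sum.cong) (auto simp: w_def)
      then have "sum w C = - 2 * real m" using cC by simp
      then show ?thesis using Vins anC bnC finC ab by (simp add: w_def)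
    qed
    have sC: "s = (\<Sum>c\<in>C. c) - real m *\<^sub>R a" using cC by (simp add: s_def sum_subtractf sum_constant_scaleR)
    have swv: "(\<Sum>t\<in>V. w t *\<^sub>R t) = z"
    proof -
      have "(\<Sum>t\<in>C. w t *\<^sub>R t) = (\<Sum>t\<in>C. (-2) *\<^sub>R t)" using Cd by (intro sum.cong) (auto simp: w_def)
      then have "(\<Sum>t\<in>C. w t *\<^sub>R t) = (-2) *\<^sub>R (\<Sum>t\<in>C. t)" by (simp add: scaleR_sum_right)
      then have "(\<Sum>t\<in>V. w t *\<^sub>R t) = real m *\<^sub>R a + real m *\<^sub>R b + (-2) *\<^sub>R (\<Sum>t\<in>C. t)"
        using Vins anC bnC finC ab by (simp add: w_def)
      also have "\<dots> = z" by (simp add: z_def y_def sC algebra_simps flip: scaleR_add_left)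
      finally show ?thesis .
    qed
    have "w a \<noteq> 0" using m1 by (simp add: w_def)
    then have "affine_dependent V"
      using affine_dependent_explicit_finite[OF fin] sw swv z aV by blast
    then show False using ind by simp
  qed
  have "inner z z > 0" using z0 by simp
  then have "real m * (2 * (real m + 1) * u^2 - real m * v^2) > 0" using zz by simp
  then show ?thesis using m1 by (simp add: zero_less_mult_iff)
qed

lemma sum_split3: "(\<Sum>i\<in>{..Suc m}. g i) = (\<Sum>i<m. g i) + g m + g (Suc m)"
  by (simp add: lessThan_Suc_atMost[symmetric])

lemma dist_from_inner:
  fixes y z :: "'a::euclidean_space"
  assumes "r \<ge> 0" "inner y y + inner z z - 2 * inner y z = r^2"
  shows "dist y z = r"
proof -
  have "(dist y z)^2 = inner y y + inner z z - 2 * inner y z"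
    by (simp add: dist_norm power2_norm_eq_inner inner_diff_left inner_diff_right inner_commute)
  then have "(dist y z)^2 = r^2" using assms by simp
  then show ?thesis using assms(1) by (simp add: power2_eq_iff_nonneg)
qed

lemma bwd:
  fixes m :: nat and u v :: real
  assumes m1: "m \<ge> 1" and u: "u > 0" and v: "v > 0"
    and cond: "real m * v^2 < 2 * (real m + 1) * u^2"
    and dim: "DIM('a::euclidean_space) \<ge> m + 1"
  shows "\<exists>V::'a set. simplex_vertices (m + 1) V \<and> one_edge_v_rest_u V v u"
proof -
  obtain B where B: "B \<subseteq> (Basis::'a set)" "card B = m + 1" "finite B"
    using obtain_subset_with_card_n[of "m+1" "Basis::'a set"] dim by auto
  obtain e where e: "bij_betw e {0..<m+1} B" using ex_bij_betw_nat_finite[OF B(3)] B(2) by auto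
  have ee: "i \<le> m \<Longrightarrow> j \<le> m \<Longrightarrow> inner (e i) (e j) = (if i = j then 1 else 0)" for i j
  proof -
    assume ij: "i \<le> m" "j \<le> m"
    then have "e i \<in> Basis" "e j \<in> Basis" using e B(1) by (auto simp: bij_betw_def)
    moreover have "e i = e j \<longleftrightarrow> i = j" using e ij by (auto simp: bij_betw_def inj_on_def)
    ultimately show ?thesis by (simp add: inner_Basis)
  qed
  define p where "p = u / sqrt 2"
  have p2: "p^2 = u^2 / 2" by (simp add: p_def power_divide)
  have p0: "p > 0" using u by (simp add: p_def)
  define \<alpha> where "\<alpha> = v / 2"
  have a0: "\<alpha> > 0" using v by (simp add: \<alpha>_def)
  define D where "D = (real m + 1) * p^2 - real m * \<alpha>^2"
  have D0: "D > 0" using cond unfolding D_def p2 \<alpha>_def by (simp add: power_divide field_simps)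
  define x where "x = (p + sqrt D) / real m"
  have mx: "real m * x - p = sqrt D" using m1 by (simp add: x_def)
  have quad: "real m * x^2 - 2 * p * x - p^2 + \<alpha>^2 = 0"
  proof -
    have "real m * (real m * x^2 - 2 * p * x - p^2 + \<alpha>^2) = (real m * x - p)^2 - (real m + 1) * p^2 + real m * \<alpha>^2"
      by (simp add: power2_eq_square algebra_simps)
    also have "\<dots> = 0" using mx D0 by (simp add: D_def)
    finally show ?thesis using m1 by simp
  qed
  define d where "d = (\<Sum>k<m. e k)"
  define f where "f i = (if i < m then p *\<^sub>R e i else if i = m then x *\<^sub>R d + \<alpha> *\<^sub>R e m else x *\<^sub>R d - \<alpha> *\<^sub>R e m)" for i
  have de: "j \<le> m \<Longrightarrow> inner d (e j) = (if j < m then 1 else 0)" for j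
  proof -
    assume j: "j \<le> m"
    have "inner d (e j) = (\<Sum>k<m. if k = j then 1 else 0)"
      unfolding d_def inner_sum_left using j ee by (intro sum.cong) auto
    then show ?thesis by simp
  qed
  have fe: "i \<le> m + 1 \<Longrightarrow> j \<le> m \<Longrightarrow> inner (f i) (e j) =
     (if i < m then (if i = j then p else 0) else if j < m then x else if i = m then \<alpha> else - \<alpha>)" for i j
    using de ee by (auto simp: f_def inner_diff_left inner_add_left)
  have fd: "i \<le> m + 1 \<Longrightarrow> inner (f i) d = (if i < m then p else real m * x)" for i
  proof -
    assume i: "i \<le> m + 1"
    have "inner (f i) d = (\<Sum>k<m. inner (f i) (e k))" by (simp add: d_def inner_sum_right)
    also have "\<dots> = (\<Sum>k<m. if i < m then (if i = k then p else 0) else x)"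
      using i fe by (intro sum.cong) auto
    finally show ?thesis by auto
  qed
  have G: "i \<le> m + 1 \<Longrightarrow> j \<le> m + 1 \<Longrightarrow> inner (f i) (f j) =
      (if j < m then (if i < m then (if i = j then p^2 else 0) else x * p)
       else if i < m then x * p
       else if i = j then real m * x^2 + \<alpha>^2 else real m * x^2 - \<alpha>^2)" for i j
  proof -
    assume ij: "i \<le> m + 1" "j \<le> m + 1"
    have ex: "inner (f i) (f j) = (if j < m then p * inner (f i) (e j) else if j = m then x * inner (f i) d + \<alpha> * inner (f i) (e m)
       else x * inner (f i) d - \<alpha> * inner (f i) (e m))"
      by (simp add: f_def[of j] inner_diff_right inner_add_right)
    show ?thesis
      unfolding ex using ij fe[of i j] fe[of i m] fd[of i]
      by (auto simp: power2_eq_square)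
  qed
  have u2: "u^2 = 2 * p^2" using p2 by simp
  have v2: "v^2 = 4 * \<alpha>^2" by (simp add: \<alpha>_def power2_eq_square)
  have dd: "i \<le> m + 1 \<Longrightarrow> j \<le> m + 1 \<Longrightarrow> i \<noteq> j \<Longrightarrow>
      dist (f i) (f j) = (if {i, j} = {m, m + 1} then v else u)" for i j
  proof -
    assume ij: "i \<le> m + 1" "j \<le> m + 1" "i \<noteq> j"
    have "inner (f i) (f i) + inner (f j) (f j) - 2 * inner (f i) (f j) = (if {i, j} = {m, m + 1} then v else u)^2"
    proof (cases "i < m")
      case True
      then have ne: "{i, j} \<noteq> {m, m + 1}" by (auto simp: doubleton_eq_iff)
      show ?thesis
      proof (cases "j < m")
        case True
        then show ?thesis using \<open>i < m\<close> ne ij G[of i i] G[of j j] G[of i j] u2 by simp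
      next
        case False
        then show ?thesis using \<open>i < m\<close> ne ij G[of i i] G[of j j] G[of i j] u2 quad
          by (simp add: algebra_simps)
      qed
    next
      case False
      show ?thesis
      proof (cases "j < m")
        case True
        then have ne: "{i, j} \<noteq> {m, m + 1}" by (auto simp: doubleton_eq_iff)
        then show ?thesis using \<open>\<not> i < m\<close> True ij G[of i i] G[of j j] G[of i j] u2 quad
          by (simp add: algebra_simps)
      next
        case False
        then have eq: "{i, j} = {m, m + 1}" using \<open>\<not> i < m\<close> ij by (auto simp: doubleton_eq_iff)
        show ?thesis using \<open>\<not> i < m\<close> False eq ij G[of i i] G[of j j] G[of i j] v2
          by (simp add: algebra_simps)
      qed
    qed
    then show ?thesis by (intro dist_from_inner) (use u v in auto)
  qed
  have injf: "inj_on f {..m+1}"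
  proof (rule inj_onI)
    fix i j assume ij: "i \<in> {..m+1}" "j \<in> {..m+1}" "f i = f j"
    show "i = j"
    proof (rule ccontr)
      assume "i \<noteq> j"
      then have "dist (f i) (f j) > 0" using dd[of i j] ij u v by (auto split: if_splits)
      then show False using ij by simp
    qed
  qed
  define V where "V = f ` {..m+1}"
  have finV: "finite V" using V_def by simp
  have cardV: "card V = m + 1 + 1" using injf by (simp add: V_def card_image)
  have mem: "f m \<in> V" "f (m + 1) \<in> V" by (auto simp: V_def)
  have ne: "f m \<noteq> f (m + 1)" using injf by (auto dest: inj_onD)
  have dv: "dist (f m) (f (m + 1)) = v" using dd[of m "m+1"] by simp
  have rest: "\<forall>y\<in>V. \<forall>z\<in>V. y \<noteq> z \<and> {y, z} \<noteq> {f m, f (m + 1)} \<longrightarrow> dist y z = u"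
  proof (intro ballI impI)
    fix y z assume yz: "y \<in> V" "z \<in> V" "y \<noteq> z \<and> {y, z} \<noteq> {f m, f (m + 1)}"
    obtain i j where i: "i \<le> m + 1" "y = f i" and j: "j \<le> m + 1" "z = f j" using yz V_def by auto
    have "i \<noteq> j" using yz i j by auto
    moreover have "{i, j} \<noteq> {m, m + 1}" using yz i j by (auto simp: doubleton_eq_iff)
    ultimately show "dist y z = u" using dd[of i j] i j by simp
  qed
  have edge: "one_edge_v_rest_u V v u"
    unfolding one_edge_v_rest_u_def using mem ne dv rest by blast
  have indep: "\<not> affine_dependent V"
  proof
    assume "affine_dependent V"
    then obtain w where w1: "sum w V = 0" and w2: "\<exists>y\<in>V. w y \<noteq> 0" and w3: "(\<Sum>y\<in>V. w y *\<^sub>R y) = 0"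
      using affine_dependent_explicit_finite[OF finV] by blast
    define l where "l i = w (f i)" for i
    have s1: "(\<Sum>i\<in>{..m+1}. l i) = 0" using w1 injf by (simp add: V_def sum.reindex l_def)
    have s3: "(\<Sum>i\<in>{..m+1}. l i *\<^sub>R f i) = 0" using w3 injf by (simp add: V_def sum.reindex l_def)
    have coord: "j \<le> m \<Longrightarrow> (\<Sum>i<m. l i * inner (f i) (e j)) + l m * inner (f m) (e j) + l (Suc m) * inner (f (Suc m)) (e j) = 0" for j
    proof -
      have "inner (\<Sum>i\<in>{..m+1}. l i *\<^sub>R f i) (e j) = 0" using s3 by simp
      then have "(\<Sum>i\<in>{..Suc m}. l i * inner (f i) (e j)) = 0" by (simp only: inner_sum_left inner_scaleR_left Suc_eq_plus1)
      then show ?thesis by (simp only: sum_split3)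
    qed
    have cm: "\<alpha> * l m - \<alpha> * l (m + 1) = 0"
    proof -
      have "(\<Sum>i<m. l i * inner (f i) (e m)) = 0" using fe by (intro sum.neutral) auto
      then show ?thesis using coord[of m] fe[of m m] fe[of "m+1" m]
        by (simp add: algebra_simps)
    qed
    have cj: "j < m \<Longrightarrow> p * l j + x * (l m + l (m + 1)) = 0" for j
    proof -
      assume j: "j < m"
      have "(\<Sum>i<m. l i * inner (f i) (e j)) = (\<Sum>i<m. if i = j then l i * p else 0)"
        using fe j by (intro sum.cong) auto
      also have "\<dots> = l j * p" using j by simp
      finally show ?thesis using coord[of j] fe[of m j] fe[of "m+1" j] j
        by (simp add: algebra_simps)
    qed
    have sl: "(\<Sum>i<m. l i) + l m + l (m + 1) = 0" using s1 by (simp only: sum_split3 Suc_eq_plus1[symmetric])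
    have "(\<Sum>j<m. p * l j + x * (l m + l (m + 1))) = 0" using cj by simp
    then have "p * (\<Sum>j<m. l j) + real m * x * (l m + l (m + 1)) = 0"
      by (simp add: sum.distrib sum_distrib_left)
    moreover have "(\<Sum>j<m. l j) = - (l m + l (m + 1))" using sl by linarith
    ultimately have "(real m * x - p) * (l m + l (m + 1)) = 0" by (simp add: algebra_simps)
    then have lsum: "l m + l (m + 1) = 0" using mx D0 by simp
    have lm: "l m = 0" "l (m + 1) = 0" using cm lsum a0 by (auto simp: algebra_simps)
    have "i \<le> m + 1 \<Longrightarrow> l i = 0" for i
    proof -
      assume "i \<le> m + 1"
      then consider "i < m" | "i = m" | "i = m + 1" by linarith
      then show "l i = 0" using lm cj[of i] p0 by cases auto
    qed
    then show False using w2 by (auto simp: V_def l_def)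
  qed
  show ?thesis using finV cardV indep edge by (auto simp: simplex_vertices_def)
qed

theorem corollary5p3:
  fixes n :: nat and u v :: real
  assumes "n \<ge> 2" and "u > 0" and "v > 0"
    and "DIM('a::euclidean_space) \<ge> n"
  shows "(\<exists>V::'a set. simplex_vertices n V \<and> one_edge_v_rest_u V v u) \<longleftrightarrow>
           (0 < v / u \<and> v / u < sqrt (2 * real n / (real n - 1)))"
proof -
  define m where "m = n - 1"
  have nm: "n = m + 1" and m1: "m \<ge> 1" using assms(1) by (auto simp: m_def)
  have rn: "real n - 1 = real m" using nm by simp
  have key: "(v / u < sqrt (2 * real n / (real n - 1))) \<longleftrightarrow> real m * v^2 < 2 * (real m + 1) * u^2"
  proof -
    have "(v / u < sqrt (2 * real n / (real n - 1))) \<longleftrightarrow> sqrt ((v/u)^2) < sqrt (2 * real n / (real n - 1))"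
      using assms(2,3) by simp
    also have "\<dots> \<longleftrightarrow> (v/u)^2 < 2 * (real m + 1) / real m" unfolding real_sqrt_less_iff rn using nm by (simp add: algebra_simps)
    also have "\<dots> \<longleftrightarrow> real m * v^2 < 2 * (real m + 1) * u^2"
      using m1 assms(2) by (simp add: power_divide field_simps)
    finally show ?thesis .
  qed
  have pos: "0 < v / u" using assms(2,3) by simp
  show ?thesis
  proof
    assume "\<exists>V::'a set. simplex_vertices n V \<and> one_edge_v_rest_u V v u"
    then obtain V :: "'a set" where V: "simplex_vertices n V" "one_edge_v_rest_u V v u" by blast
    then obtain a b where ab: "a \<in> V" "b \<in> V" "a \<noteq> b" "dist a b = v"
      "\<forall>x\<in>V. \<forall>y\<in>V. x \<noteq> y \<and> {x, y} \<noteq> {a, b} \<longrightarrow> dist x y = u"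
      unfolding one_edge_v_rest_u_def by blast
    have "real m * v^2 < 2 * (real m + 1) * u^2"
      using fwd[of V m a b v u] V(1) ab m1 nm by (simp add: simplex_vertices_def)
    then show "0 < v / u \<and> v / u < sqrt (2 * real n / (real n - 1))" using key pos by simp
  next
    assume "0 < v / u \<and> v / u < sqrt (2 * real n / (real n - 1))"
    then have "real m * v^2 < 2 * (real m + 1) * u^2" using key by simp
    then show "\<exists>V::'a set. simplex_vertices n V \<and> one_edge_v_rest_u V v u"
      using bwd[of m u v] m1 assms nm by simp
  qed
qed
end
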